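(* Let $T\ge2$ and let $n\ge2T^2$ be an integer. Then for every $|x|\le T$, $$\int_{|y|\ge 2T}k_n(x,y)^2\,dy\le\frac{2}{\pi^2T}+\frac{12T^2}{\sqrt{2n+1}}\ln(2n+1).$$
   Context: For an integer $n\ge0$, $H_n(x)=(-1)^n e^{x^2}\frac{d^n}{dx^n}e^{-x^2}$ is the $n$-th Hermite polynomial and $h_n(x)=\frac{1}{\pi^{1/4}\sqrt{2^n n!}}H_n(x)e^{-x^2/2}$ is the $n$-th Hermite function; $(h_n)_{n\ge0}$ is an orthonormal basis of $L^2(\mathbb R)$. The kernel $k_n(x,y)=\sum_{k=0}^n h_k(x)h_k(y)$ is the kernel of the orthogonal projection of $L^2(\mathbb R)$ onto $\mathrm{span}(h_0,\dots,h_n)$. *)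

theory Defs
  imports "HOL-Analysis.Analysis"
begin

definition hermite_poly :: "nat \<Rightarrow> real \<Rightarrow> real" where
  "hermite_poly n x = (-1) ^ n * exp (x\<^sup>2) * ((deriv ^^ n) (\<lambda>t. exp (- (t\<^sup>2))) x)"

definition hermite_fun :: "nat \<Rightarrow> real \<Rightarrow> real" where
  "hermite_fun n x = hermite_poly n x * exp (- (x\<^sup>2) / 2)
      / (root 4 pi * sqrt (2 ^ n * fact n))"

definition hermite_kernel :: "nat \<Rightarrow> real \<Rightarrow> real \<Rightarrow> real" where
  "hermite_kernel n x y = (\<Sum>k\<le>n. hermite_fun k x * hermite_fun k y)"

end

theory Submission
  imports Defs "HOL-Probability.Probability" "HOL-Computational_Algebra.Polynomial"
begin


fun hp :: "nat \<Rightarrow> real poly" where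
  "hp 0 = 1"
| "hp (Suc n) = [:0,2:] * hp n - pderiv (hp n)"

lemma hp_pderiv: "pderiv (hp (Suc n)) = smult (2 * real (Suc n)) (hp n)"
proof (induction n)
  case 0
  then show ?case by (simp add: pderiv_pCons)
next
  case (Suc n)
  have aux: "\<And>q::real poly. pderiv ([:0,2:] * q) = smult 2 q + [:0,2:] * pderiv q"
    by (simp add: pderiv_mult pderiv_pCons pderiv_smult)
  have "pderiv (hp (Suc (Suc n))) = smult 2 (hp (Suc n)) + [:0,2:] * pderiv (hp (Suc n)) - pderiv (pderiv (hp (Suc n)))"
    by (simp only: hp.simps(2)[of "Suc n"] pderiv_diff aux)
  also have "\<dots> = smult 2 (hp (Suc n)) + smult (2 * real (Suc n)) ([:0,2:] * hp n - pderiv (hp n))"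
    using Suc by (simp add: pderiv_smult algebra_simps smult_diff_right)
  also have "\<dots> = smult 2 (hp (Suc n)) + smult (2 * real (Suc n)) (hp (Suc n))"
    by (simp only: hp.simps(2))
  also have "\<dots> = smult (2 + 2 * real (Suc n)) (hp (Suc n))"
    by (simp only: smult_add_left)
  also have "2 + 2 * real (Suc n) = 2 * real (Suc (Suc n))" by simp
  finally show ?case .
qed

lemma rodrigues: "(deriv ^^ n) (\<lambda>t. exp (- (t\<^sup>2))) = (\<lambda>t. (-1) ^ n * poly (hp n) t * exp (- (t\<^sup>2)))"
proof (induction n)
  case 0
  then show ?case by simp
next
  case (Suc n)
  have "\<And>t. ((\<lambda>t. (-1) ^ n * poly (hp n) t * exp (- (t\<^sup>2))) has_real_derivative
          (-1) ^ Suc n * poly (hp (Suc n)) t * exp (- (t\<^sup>2))) (at t)"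
  proof -
    fix t
    show "((\<lambda>t. (-1) ^ n * poly (hp n) t * exp (- (t\<^sup>2))) has_real_derivative
          (-1) ^ Suc n * poly (hp (Suc n)) t * exp (- (t\<^sup>2))) (at t)"
      by (auto intro!: derivative_eq_intros simp: algebra_simps)
  qed
  then have "deriv (\<lambda>t. (-1) ^ n * poly (hp n) t * exp (- (t\<^sup>2))) = (\<lambda>t. (-1) ^ Suc n * poly (hp (Suc n)) t * exp (- (t\<^sup>2)))"
    by (intro ext DERIV_imp_deriv)
  then show ?case using Suc by simp
qed

lemma hermite_poly_eq: "hermite_poly n x = poly (hp n) x"
  unfolding hermite_poly_def rodrigues
  by (simp add: exp_minus field_simps flip: power_mult_distrib)

definition cn :: "nat \<Rightarrow> real" where
  "cn n = 1 / (root 4 pi * sqrt (2 ^ n * fact n))"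

lemma hf_eq: "hermite_fun n x = cn n * poly (hp n) x * exp (- (x\<^sup>2) / 2)"
  unfolding hermite_fun_def cn_def hermite_poly_eq by simp

lemma cn_pos: "cn n > 0"
  unfolding cn_def by simp

lemma cn_Suc: "cn n = sqrt (2 * real (Suc n)) * cn (Suc n)"
proof -
  have "sqrt (2 ^ Suc n * fact (Suc n)) = sqrt (2 ^ n * fact n) * sqrt (2 * real (Suc n))"
    by (simp only: real_sqrt_mult[symmetric]) (simp add: algebra_simps)
  then show ?thesis unfolding cn_def by (simp add: field_simps)
qed



lemma pderiv_hp: "pderiv (hp n) = [:0,2:] * hp n - hp (Suc n)"
  by simp

lemma hf_fun: "hermite_fun n = (\<lambda>x. cn n * poly (hp n) x * exp (- (x\<^sup>2) / 2))"
  using hf_eq by auto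

lemma hf_deriv: "(hermite_fun n has_real_derivative
   (x * hermite_fun n x - sqrt (2 * real (Suc n)) * hermite_fun (Suc n) x)) (at x)"
proof -
  have "((\<lambda>x. cn n * poly (hp n) x * exp (- (x\<^sup>2) / 2)) has_real_derivative
     cn n * (poly (pderiv (hp n)) x * exp (- (x\<^sup>2) / 2) + poly (hp n) x * (exp (- (x\<^sup>2) / 2) * (- x)))) (at x)"
    by (auto intro!: derivative_eq_intros simp: algebra_simps)
  moreover have "cn n * (poly (pderiv (hp n)) x * exp (- (x\<^sup>2) / 2) + poly (hp n) x * (exp (- (x\<^sup>2) / 2) * (- x)))
     = x * hermite_fun n x - sqrt (2 * real (Suc n)) * hermite_fun (Suc n) x"
    unfolding pderiv_hp hf_eq cn_Suc[of n] by (simp add: algebra_simps)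
  ultimately show ?thesis by (simp add: hf_fun)
qed

lemma hp_rec: "hp (Suc (Suc m)) = [:0,2:] * hp (Suc m) - smult (2 * real (Suc m)) (hp m)"
  by (simp only: hp.simps(2)[of "Suc m"] hp_pderiv)

lemma hf_rec: "sqrt (2 * real (Suc n)) * hermite_fun (Suc n) x
   = 2 * x * hermite_fun n x - sqrt (2 * real n) * hermite_fun (n - 1) x"
proof (cases n)
  case 0
  then show ?thesis using cn_Suc[of 0] by (simp add: hf_eq algebra_simps)
next
  case (Suc m)
  have c: "sqrt (2 * real (Suc m)) * cn m = 2 * real (Suc m) * cn (Suc m)"
    unfolding cn_Suc[of m] by (simp add: algebra_simps)
  have "sqrt (2 * real (Suc n)) * hermite_fun (Suc n) x
      = cn (Suc m) * (2 * x * poly (hp (Suc m)) x - 2 * real (Suc m) * poly (hp m) x) * exp (- (x\<^sup>2) / 2)"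
    unfolding Suc hf_eq hp_rec cn_Suc[of "Suc m"] by (simp add: algebra_simps)
  also have "\<dots> = cn (Suc m) * 2 * x * poly (hp (Suc m)) x * exp (- (x\<^sup>2) / 2)
      - (2 * real (Suc m) * cn (Suc m)) * poly (hp m) x * exp (- (x\<^sup>2) / 2)"
    by (simp add: algebra_simps)
  also have "\<dots> = cn (Suc m) * 2 * x * poly (hp (Suc m)) x * exp (- (x\<^sup>2) / 2)
      - (sqrt (2 * real (Suc m)) * cn m) * poly (hp m) x * exp (- (x\<^sup>2) / 2)"
    by (simp only: c)
  also have "\<dots> = 2 * x * hermite_fun n x - sqrt (2 * real n) * hermite_fun (n - 1) x"
    unfolding Suc hf_eq by (simp add: algebra_simps)
  finally show ?thesis .
qed

lemma hf_deriv_Suc: "(hermite_fun (Suc n) has_real_derivative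
   (sqrt (2 * real (Suc n)) * hermite_fun n x - x * hermite_fun (Suc n) x)) (at x)"
proof -
  have eq: "x * hermite_fun (Suc n) x - sqrt (2 * real (Suc (Suc n))) * hermite_fun (Suc (Suc n)) x
     = sqrt (2 * real (Suc n)) * hermite_fun n x - x * hermite_fun (Suc n) x"
    using hf_rec[of "Suc n" x] by simp
  show ?thesis using hf_deriv[of "Suc n" x] unfolding eq .
qed



lemma CD: "(x - y) * hermite_kernel n x y =
  sqrt (2 * real (Suc n)) / 2 * (hermite_fun (Suc n) x * hermite_fun n y - hermite_fun n x * hermite_fun (Suc n) y)"
proof (induction n)
  case 0
  have "sqrt 2 * hermite_fun 1 x = 2 * x * hermite_fun 0 x" "sqrt 2 * hermite_fun 1 y = 2 * y * hermite_fun 0 y"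
    using hf_rec[of 0 x] hf_rec[of 0 y] by simp_all
  then show ?case unfolding hermite_kernel_def by (simp add: algebra_simps)
next
  case (Suc n)
  define s where "s = sqrt (2 * real (Suc n))"
  define t where "t = sqrt (2 * real (Suc (Suc n)))"
  have rx: "t * hermite_fun (Suc (Suc n)) x = 2 * x * hermite_fun (Suc n) x - s * hermite_fun n x"
    using hf_rec[of "Suc n" x] unfolding s_def t_def by simp
  have ry: "t * hermite_fun (Suc (Suc n)) y = 2 * y * hermite_fun (Suc n) y - s * hermite_fun n y"
    using hf_rec[of "Suc n" y] unfolding s_def t_def by simp
  have "(x - y) * hermite_kernel (Suc n) x y = (x - y) * hermite_kernel n x y
     + (x - y) * hermite_fun (Suc n) x * hermite_fun (Suc n) y"
    unfolding hermite_kernel_def by (simp add: algebra_simps)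
  also have "\<dots> = s / 2 * (hermite_fun (Suc n) x * hermite_fun n y - hermite_fun n x * hermite_fun (Suc n) y)
     + (x - y) * hermite_fun (Suc n) x * hermite_fun (Suc n) y"
    using Suc.IH unfolding s_def by simp
  also have "\<dots> = ((t * hermite_fun (Suc (Suc n)) x) * hermite_fun (Suc n) y - hermite_fun (Suc n) x * (t * hermite_fun (Suc (Suc n)) y)) / 2"
    unfolding rx ry by (simp add: algebra_simps)
  also have "\<dots> = t / 2 * (hermite_fun (Suc (Suc n)) x * hermite_fun (Suc n) y - hermite_fun (Suc n) x * hermite_fun (Suc (Suc n)) y)"
    by (simp add: field_simps)
  finally show ?case unfolding t_def .
qed



definition Fs :: "nat \<Rightarrow> real \<Rightarrow> real" where
  "Fs n y = (2 * real n + 1 - y\<^sup>2) * (hermite_fun n y)\<^sup>2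
     + (y * hermite_fun n y - sqrt (2 * real (Suc n)) * hermite_fun (Suc n) y)\<^sup>2"

lemma Fs_deriv: "(Fs n has_real_derivative (- 2 * y * (hermite_fun n y)\<^sup>2)) (at y)"
proof -
  define c where "c = sqrt (2 * real (Suc n))"
  have cc: "c\<^sup>2 = 2 * real n + 2" unfolding c_def by simp
  have d1: "\<And>y. (hermite_fun n has_real_derivative (y * hermite_fun n y - c * hermite_fun (Suc n) y)) (at y)"
    using hf_deriv unfolding c_def by blast
  have d2: "\<And>y. (hermite_fun (Suc n) has_real_derivative (c * hermite_fun n y - y * hermite_fun (Suc n) y)) (at y)"
    using hf_deriv_Suc unfolding c_def by blast
  have fs: "Fs n = (\<lambda>y. (2 * real n + 1 - y\<^sup>2) * (hermite_fun n y)\<^sup>2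
     + (y * hermite_fun n y - c * hermite_fun (Suc n) y)\<^sup>2)"
    unfolding Fs_def c_def by auto
  define u where "u = hermite_fun n y"
  define v where "v = hermite_fun (Suc n) y"
  have d: "((\<lambda>y. (2 * real n + 1 - y\<^sup>2) * (hermite_fun n y)\<^sup>2
     + (y * hermite_fun n y - c * hermite_fun (Suc n) y)\<^sup>2) has_real_derivative
     (- (2 * y) * u\<^sup>2 + (2 * real n + 1 - y\<^sup>2) * (2 * u * (y * u - c * v))
      + 2 * (y * u - c * v) * (u + y * (y * u - c * v) - c * (c * u - y * v)))) (at y)"
    unfolding u_def v_def
    by (auto intro!: derivative_eq_intros d1 d2 simp: power2_eq_square algebra_simps)
  have e2: "- (2 * y) * u\<^sup>2 + (2 * real n + 1 - y\<^sup>2) * (2 * u * (y * u - c * v))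
      + 2 * (y * u - c * v) * (u + y * (y * u - c * v) - c * (c * u - y * v)) = - 2 * y * u\<^sup>2"
  proof -
    have e: "u + y * (y * u - c * v) - c * (c * u - y * v) = (y\<^sup>2 - (2 * real n + 1)) * u"
    proof -
      have "c * (c * u) = (2 * real n + 2) * u" by (metis cc mult.assoc power2_eq_square)
      then show ?thesis by (simp add: algebra_simps power2_eq_square)
    qed
    show ?thesis unfolding e by (simp add: algebra_simps power2_eq_square)
  qed
  show ?thesis unfolding fs using d[unfolded e2] unfolding u_def .
qed

lemma Fs_le_0: "Fs n y \<le> Fs n 0"
proof -
  have D: "\<And>x. \<exists>d. DERIV (Fs n) x :> d \<and> d = - 2 * x * (hermite_fun n x)\<^sup>2"
    using Fs_deriv by blast
  show ?thesis
proof (cases "y \<ge> 0")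
  case True
  show ?thesis
    by (rule DERIV_nonpos_imp_nonincreasing[OF True])
       (use D in \<open>force intro: mult_nonneg_nonneg\<close>)
next
  case False
  show ?thesis
    by (rule DERIV_nonneg_imp_nondecreasing[of y 0]) 
       (use False D in \<open>force intro: mult_nonpos_nonneg\<close>)+
qed
qed



definition e0 :: "nat \<Rightarrow> real" where "e0 k = (hermite_fun k 0)\<^sup>2"

lemma e0_nonneg: "e0 k \<ge> 0" unfolding e0_def by simp

lemma e0_rec: "2 * real (Suc k) * e0 (Suc k) = 2 * real k * e0 (k - 1)"
proof -
  have "sqrt (2 * real (Suc k)) * hermite_fun (Suc k) 0 = - (sqrt (2 * real k) * hermite_fun (k - 1) 0)"
    using hf_rec[of k 0] by simp
  then have "(sqrt (2 * real (Suc k)) * hermite_fun (Suc k) 0)\<^sup>2 = (sqrt (2 * real k) * hermite_fun (k - 1) 0)\<^sup>2"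
    by simp
  then show ?thesis unfolding e0_def power_mult_distrib by simp
qed

lemma e0_0: "e0 0 ^ 2 * pi = 1"
proof -
  have r: "root 4 pi ^ 4 = pi" by (simp add: real_root_pow_pos2)
  have "e0 0 = 1 / (root 4 pi)\<^sup>2" unfolding e0_def hf_eq cn_def by (simp add: power_divide)
  then have "e0 0 ^ 2 = 1 / root 4 pi ^ 4" by (simp add: power_divide flip: power_mult)
  then show ?thesis using r by simp
qed

lemma e0_1: "e0 1 = 0"
  using e0_rec[of 0] by simp

lemma e0_ind: "e0 (2 * m + 1) = 0 \<and> e0 (2 * m) ^ 2 * pi * (3 * real m + 1) \<le> 1"
proof (induction m)
  case 0
  then show ?case using e0_1 e0_0 by simp
next
  case (Suc m)
  have o: "e0 (2 * Suc m + 1) = 0"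
    using e0_rec[of "2 * m + 2"] Suc.IH by simp
  have ev: "e0 (2 * Suc m) = (2 * real m + 1) / (2 * real m + 2) * e0 (2 * m)"
    using e0_rec[of "2 * m + 1"] by (simp add: field_simps)
  have poly: "(2 * real m + 1)\<^sup>2 * (3 * real m + 4) \<le> (2 * real m + 2)\<^sup>2 * (3 * real m + 1)"
    by (simp add: power2_eq_square algebra_simps)
  define X where "X = e0 (2 * m) ^ 2 * pi"
  have X0: "X \<ge> 0" unfolding X_def by simp
  have IH: "X * (3 * real m + 1) \<le> 1" using Suc.IH unfolding X_def by simp
  have "(2 * real m + 1)\<^sup>2 * (3 * real m + 4) * X \<le> (2 * real m + 2)\<^sup>2 * (3 * real m + 1) * X"
    by (rule mult_right_mono[OF poly X0])
  also have "\<dots> \<le> (2 * real m + 2)\<^sup>2 * 1"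
    using IH by (simp add: mult.assoc mult_left_mono mult.commute)
  finally have k: "(2 * real m + 1)\<^sup>2 * (3 * real m + 4) * X \<le> (2 * real m + 2)\<^sup>2" by simp
  have "e0 (2 * Suc m) ^ 2 * pi * (3 * real (Suc m) + 1) = (2 * real m + 1)\<^sup>2 * (3 * real m + 4) * X / (2 * real m + 2)\<^sup>2"
    unfolding ev X_def by (simp add: field_simps power2_eq_square)
  also have "\<dots> \<le> 1" using k by (simp add: divide_le_eq_1)
  finally show ?case using o by simp
qed

lemma Fs0: "Fs n 0 = (2 * real n + 1) * e0 n + 2 * real (Suc n) * e0 (Suc n)"
  unfolding Fs_def e0_def by (simp add: power_mult_distrib)

lemma Fs0_nonneg: "Fs n 0 \<ge> 0"
  unfolding Fs0 using e0_nonneg by (simp add: add_nonneg_nonneg)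

lemma Fs0_bound: "(Fs n 0)\<^sup>2 * pi \<le> 4 / 3 * (2 * real n + 1)"
proof (cases "even n")
  case True
  then obtain m where m: "n = 2 * m" by (auto elim: evenE)
  have "Fs n 0 = (4 * real m + 1) * e0 (2 * m)"
    unfolding Fs0 m using e0_ind[of m] by simp
  then have "(Fs n 0)\<^sup>2 * pi = (4 * real m + 1)\<^sup>2 / (3 * real m + 1) * (e0 (2 * m) ^ 2 * pi * (3 * real m + 1))"
    by (simp add: field_simps power2_eq_square)
  also have "\<dots> \<le> (4 * real m + 1)\<^sup>2 / (3 * real m + 1) * 1"
    by (rule mult_left_mono) (use e0_ind[of m] in auto)
  also have "\<dots> \<le> 4 / 3 * (2 * real n + 1)"
    unfolding m by (simp add: field_simps power2_eq_square)
  finally show ?thesis .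
next
  case False
  then obtain m where m: "n = 2 * m + 1" by (auto elim: oddE)
  have ev: "e0 (2 * m + 2) = (2 * real m + 1) / (2 * real m + 2) * e0 (2 * m)"
    using e0_rec[of "2 * m + 1"] by (simp add: field_simps)
  have "Fs n 0 = 2 * (2 * real m + 1) * e0 (2 * m)"
    unfolding Fs0 m using e0_ind[of m] ev by (simp add: field_simps)
  then have "(Fs n 0)\<^sup>2 * pi = 4 * (2 * real m + 1)\<^sup>2 / (3 * real m + 1) * (e0 (2 * m) ^ 2 * pi * (3 * real m + 1))"
    by (simp add: field_simps power2_eq_square)
  also have "\<dots> \<le> 4 * (2 * real m + 1)\<^sup>2 / (3 * real m + 1) * 1"
    by (rule mult_left_mono) (use e0_ind[of m] in auto)
  also have "\<dots> \<le> 4 / 3 * (2 * real n + 1)"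
    unfolding m by (simp add: field_simps power2_eq_square)
  finally show ?thesis .
qed



lemma gauss_mom_int: "integrable lborel (\<lambda>x::real. exp (- x\<^sup>2) * x ^ i)"
proof (cases "even i")
  case True
  then obtain k where k: "i = 2 * k" by (auto elim: evenE)
  have "has_bochner_integral lborel (\<lambda>x::real. exp (- x\<^sup>2) * x ^ (2 * k))
     (2 *\<^sub>R ((sqrt pi / 2) * (fact (2 * k) / (2 ^ (2 * k) * fact k))))"
    by (rule has_bochner_integral_even_function[OF gaussian_moment_even_pos]) (simp add: power_mult)
  then show ?thesis unfolding k by (rule integrable.intros)
next
  case False
  then obtain k where k: "i = 2 * k + 1" by (auto elim: oddE)
  have "has_bochner_integral lborel (\<lambda>x::real. exp (- x\<^sup>2) * x ^ (2 * k + 1)) 0"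
    by (rule has_bochner_integral_odd_function[OF gaussian_moment_odd_pos]) (simp add: power_mult)
  then show ?thesis unfolding k by (rule integrable.intros)
qed

lemma poly_gauss_int: "integrable lborel (\<lambda>x::real. poly p x * exp (- x\<^sup>2))"
proof -
  have "integrable lborel (\<lambda>x::real. \<Sum>i\<le>degree p. coeff p i * (exp (- x\<^sup>2) * x ^ i))"
    by (intro Bochner_Integration.integrable_sum Bochner_Integration.integrable_mult_right gauss_mom_int)
  moreover have "(\<lambda>x::real. \<Sum>i\<le>degree p. coeff p i * (exp (- x\<^sup>2) * x ^ i)) = (\<lambda>x. poly p x * exp (- x\<^sup>2))"
    by (rule ext) (simp add: poly_altdef sum_distrib_left sum_distrib_right mult_ac)
  ultimately show ?thesis by simp
qed

lemma mono_gauss_lim: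
  assumes F: "filterlim (\<lambda>x::real. x\<^sup>2) at_top F"
  shows "((\<lambda>x::real. x ^ i * exp (- x\<^sup>2)) \<longlongrightarrow> 0) F"
proof (rule tendsto_0_le)
  show "((\<lambda>x. (x\<^sup>2) ^ i / exp (x\<^sup>2)) \<longlongrightarrow> 0) F"
    by (rule filterlim_compose[OF tendsto_power_div_exp_0 F])
  have "eventually (\<lambda>x. x\<^sup>2 \<ge> 1) F"
    using F by (simp add: filterlim_at_top)
  then show "eventually (\<lambda>x. norm (x ^ i * exp (- x\<^sup>2)) \<le> norm ((x\<^sup>2) ^ i / exp (x\<^sup>2)) * 1) F"
  proof eventually_elim
    case (elim x)
    then have "\<bar>x\<bar> \<ge> 1" by (metis abs_le_square_iff abs_one one_power2)
    then have "\<bar>x\<bar> ^ i \<le> (\<bar>x\<bar> ^ 2) ^ i"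
      using mult_left_mono[of 1 "\<bar>x\<bar>" "\<bar>x\<bar>"] by (intro power_mono) (auto simp: power2_eq_square)
    then show ?case by (simp add: abs_mult power_abs exp_minus field_simps)
  qed
qed

lemma poly_gauss_lim:
  assumes F: "filterlim (\<lambda>x::real. x\<^sup>2) at_top F"
  shows "((\<lambda>x::real. poly p x * exp (- x\<^sup>2)) \<longlongrightarrow> 0) F"
proof -
  have "((\<lambda>x::real. \<Sum>i\<le>degree p. coeff p i * (x ^ i * exp (- x\<^sup>2))) \<longlongrightarrow> (\<Sum>i\<le>degree p. coeff p i * 0)) F"
    by (intro tendsto_sum tendsto_mult tendsto_const mono_gauss_lim F)
  moreover have "(\<lambda>x::real. \<Sum>i\<le>degree p. coeff p i * (x ^ i * exp (- x\<^sup>2))) = (\<lambda>x. poly p x * exp (- x\<^sup>2))"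
    by (rule ext) (simp add: poly_altdef sum_distrib_left sum_distrib_right mult_ac)
  ultimately show ?thesis by simp
qed

lemma sq_top: "filterlim (\<lambda>x::real. x\<^sup>2) at_top at_top"
  by (intro filterlim_pow_at_top filterlim_ident) auto
lemma sq_bot: "filterlim (\<lambda>x::real. x\<^sup>2) at_top at_bot"
  using filterlim_compose[OF sq_top filterlim_uminus_at_top_at_bot] by simp

lemma hf_prod: "hermite_fun n y * hermite_fun m y = cn n * cn m * (poly (hp n * hp m) y * exp (- y\<^sup>2))"
proof -
  have "exp (- (y\<^sup>2) / 2) * exp (- (y\<^sup>2) / 2) = exp (- y\<^sup>2)"
    by (simp flip: exp_add)
  then show ?thesis unfolding hf_eq by (simp add: algebra_simps)
qed

lemma hf_sq_int: "integrable lborel (\<lambda>y. (hermite_fun n y)\<^sup>2)"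
proof -
  have "integrable lborel (\<lambda>y. cn n * cn n * (poly (hp n * hp n) y * exp (- y\<^sup>2)))"
    by (intro integrable_mult_right poly_gauss_int)
  then show ?thesis by (simp add: power2_eq_square hf_prod)
qed

lemma hf_prod_int: "integrable lborel (\<lambda>y. hermite_fun n y * hermite_fun m y)"
proof -
  have "integrable lborel (\<lambda>y. cn n * cn m * (poly (hp n * hp m) y * exp (- y\<^sup>2)))"
    by (intro integrable_mult_right poly_gauss_int)
  then show ?thesis by (simp add: hf_prod)
qed

lemma hf_prod_lim:
  assumes F: "filterlim (\<lambda>x::real. x\<^sup>2) at_top F"
  shows "((\<lambda>y. hermite_fun n y * hermite_fun m y) \<longlongrightarrow> 0) F"
proof -
  have "((\<lambda>y. cn n * cn m * (poly (hp n * hp m) y * exp (- y\<^sup>2))) \<longlongrightarrow> cn n * cn m * 0) F"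
    by (intro tendsto_mult tendsto_const poly_gauss_lim F)
  then show ?thesis by (simp add: hf_prod)
qed

lemma hf_norm_step: "(LINT y|lborel. (hermite_fun (Suc n) y)\<^sup>2) = (LINT y|lborel. (hermite_fun n y)\<^sup>2)"
proof -
  define c where "c = sqrt (2 * real (Suc n))"
  have c0: "c > 0" unfolding c_def by simp
  define G where "G = (\<lambda>y. - (hermite_fun n y * hermite_fun (Suc n) y) / c)"
  define f where "f = (\<lambda>y. (hermite_fun (Suc n) y)\<^sup>2 - (hermite_fun n y)\<^sup>2)"
  have dG: "(G has_real_derivative f y) (at y)" for y
  proof -
    have d1: "(hermite_fun n has_real_derivative (y * hermite_fun n y - c * hermite_fun (Suc n) y)) (at y)"
      using hf_deriv unfolding c_def by blast
    have d2: "(hermite_fun (Suc n) has_real_derivative (c * hermite_fun n y - y * hermite_fun (Suc n) y)) (at y)"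
      using hf_deriv_Suc unfolding c_def by blast
    have "(G has_real_derivative - ((y * hermite_fun n y - c * hermite_fun (Suc n) y) * hermite_fun (Suc n) y
        + hermite_fun n y * (c * hermite_fun n y - y * hermite_fun (Suc n) y)) / c) (at y)"
      unfolding G_def using c0 by (auto intro!: derivative_eq_intros d1 d2 simp: field_simps)
    moreover have "- ((y * hermite_fun n y - c * hermite_fun (Suc n) y) * hermite_fun (Suc n) y
        + hermite_fun n y * (c * hermite_fun n y - y * hermite_fun (Suc n) y)) / c = f y"
    proof -
      have "(y * hermite_fun n y - c * hermite_fun (Suc n) y) * hermite_fun (Suc n) y
        + hermite_fun n y * (c * hermite_fun n y - y * hermite_fun (Suc n) y) = c * ((hermite_fun n y)\<^sup>2 - (hermite_fun (Suc n) y)\<^sup>2)"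
        by (simp add: algebra_simps power2_eq_square)
      then show ?thesis unfolding f_def using c0 by simp
    qed
    ultimately show ?thesis by simp
  qed
  have hc: "isCont (hermite_fun k) y" for k y by (rule DERIV_isCont[OF hf_deriv])
  have cont: "isCont f y" for y
    unfolding f_def by (intro continuous_intros hc)
  have fint: "integrable lborel f"
    unfolding f_def by (intro Bochner_Integration.integrable_diff hf_sq_int)
  have Gt: "(G \<longlongrightarrow> 0) at_top"
  proof -
    have "((\<lambda>y. - (hermite_fun n y * hermite_fun (Suc n) y) / c) \<longlongrightarrow> - 0 / c) at_top"
      by (intro tendsto_intros hf_prod_lim sq_top) (use c0 in auto)
    then show ?thesis unfolding G_def by simp
  qed
  have Gb: "(G \<longlongrightarrow> 0) at_bot"
  proof -
    have "((\<lambda>y. - (hermite_fun n y * hermite_fun (Suc n) y) / c) \<longlongrightarrow> - 0 / c) at_bot"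
      by (intro tendsto_intros hf_prod_lim sq_bot) (use c0 in auto)
    then show ?thesis unfolding G_def by simp
  qed
  have "(LBINT x=-\<infinity>..\<infinity>. f x) = 0 - 0"
  proof (rule interval_integral_FTC_integrable[where F=G])
    show "- \<infinity> < (\<infinity>::ereal)" by simp
    show "(G has_vector_derivative f x) (at x)" for x
      using dG[of x] by (simp add: has_real_derivative_iff_has_vector_derivative)
    show "isCont f x" for x by (rule cont)
    show "set_integrable lborel (einterval (- \<infinity>) \<infinity>) f"
      unfolding set_integrable_def einterval_eq_UNIV using fint by simp
    show "((G \<circ> real_of_ereal) \<longlongrightarrow> 0) (at_right (- \<infinity>))"
      using Gb by (simp add: ereal_tendsto_simps)
    show "((G \<circ> real_of_ereal) \<longlongrightarrow> 0) (at_left \<infinity>)"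
      using Gt by (simp add: ereal_tendsto_simps)
  qed
  then have "(LINT y|lborel. f y) = 0"
    by (simp add: interval_lebesgue_integral_def set_lebesgue_integral_def)
  then show ?thesis unfolding f_def
    using hf_sq_int by (simp add: Bochner_Integration.integral_diff)
qed

lemma hf_norm: "(LINT y|lborel. (hermite_fun n y)\<^sup>2) = 1"
proof (induction n)
  case 0
  have g: "has_bochner_integral lborel (\<lambda>x::real. exp (- x\<^sup>2)) (2 *\<^sub>R (sqrt pi / 2))"
    by (rule has_bochner_integral_even_function[OF gaussian_moment_0]) simp
  have c: "cn 0 * cn 0 = 1 / sqrt pi"
  proof -
    have "root 4 pi = sqrt (sqrt pi)"
      using real_root_mult_exp[of 2 2 pi] by (simp add: sqrt_def)
    then have r: "root 4 pi * root 4 pi = sqrt pi" by simp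
    show ?thesis unfolding cn_def by (simp add: r)
  qed
  have "(LINT y|lborel. (hermite_fun 0 y)\<^sup>2) = (LINT y|lborel. cn 0 * cn 0 * exp (- y\<^sup>2))"
    by (simp add: power2_eq_square hf_prod)
  also have "\<dots> = cn 0 * cn 0 * sqrt pi"
    using g by (simp add: has_bochner_integral_integral_eq)
  also have "\<dots> = 1" using c by simp
  finally show ?case .
next
  case (Suc n)
  then show ?case using hf_norm_step by simp
qed



lemma cs2:
  fixes p q u w s :: real
  assumes "s > 0"
  shows "(p * u + q * w)\<^sup>2 \<le> (p\<^sup>2 + q\<^sup>2 * s) * (u\<^sup>2 + w\<^sup>2 / s)"
proof -
  have "(p\<^sup>2 + q\<^sup>2 * s) * (u\<^sup>2 + w\<^sup>2 / s) - (p * u + q * w)\<^sup>2 = (p * w - q * s * u)\<^sup>2 / s"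
    using assms by (simp add: field_simps power2_eq_square)
  moreover have "(p * w - q * s * u)\<^sup>2 / s \<ge> 0" using assms by simp
  ultimately show ?thesis by linarith
qed

lemma bulk_cs:
  fixes a b u w y c l :: real
  assumes s: "l - y\<^sup>2 > 0" and c: "c > 0" and lc: "l \<le> c\<^sup>2"
  shows "(a * u - b * ((y * u - w) / c))\<^sup>2 \<le> (a\<^sup>2 + b\<^sup>2 + 2 * \<bar>a * b\<bar> * \<bar>y\<bar> / c) * (((l - y\<^sup>2) * u\<^sup>2 + w\<^sup>2) / (l - y\<^sup>2))"
proof -
  define s where "s = l - y\<^sup>2"
  have s0: "s > 0" using s unfolding s_def .
  have e: "a * u - b * ((y * u - w) / c) = (a - b * y / c) * u + (b / c) * w"
    using c by (simp add: field_simps)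
  have "(a * u - b * ((y * u - w) / c))\<^sup>2 \<le> ((a - b * y / c)\<^sup>2 + (b / c)\<^sup>2 * s) * (u\<^sup>2 + w\<^sup>2 / s)"
    unfolding e by (rule cs2[OF s0])
  moreover have "(a - b * y / c)\<^sup>2 + (b / c)\<^sup>2 * s = a\<^sup>2 - 2 * (a * b * y) / c + b\<^sup>2 * (y\<^sup>2 + s) / c\<^sup>2"
    using c by (simp add: field_simps power2_eq_square)
  also have "\<dots> \<le> a\<^sup>2 + b\<^sup>2 + 2 * \<bar>a * b\<bar> * \<bar>y\<bar> / c"
  proof -
    have "- 2 * (a * b * y) / c \<le> 2 * \<bar>a * b\<bar> * \<bar>y\<bar> / c"
    proof -
      have "- (a * b * y) \<le> \<bar>a * b\<bar> * \<bar>y\<bar>"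
        by (metis abs_ge_minus_self abs_mult)
      then have "2 * (- (a * b * y)) / c \<le> 2 * (\<bar>a * b\<bar> * \<bar>y\<bar>) / c"
        using c by (intro divide_right_mono) (auto simp: mult_ac)
      then show ?thesis by (simp add: mult.assoc)
    qed
    moreover have "b\<^sup>2 * (y\<^sup>2 + s) / c\<^sup>2 \<le> b\<^sup>2"
    proof -
      have "y\<^sup>2 + s = l" unfolding s_def by simp
      then have "b\<^sup>2 * (y\<^sup>2 + s) \<le> b\<^sup>2 * c\<^sup>2" using lc by (simp add: mult_left_mono)
      then show ?thesis using c by (simp add: divide_le_eq)
    qed
    ultimately show ?thesis by linarith
  qed
  moreover have "u\<^sup>2 + w\<^sup>2 / s \<ge> 0" using s0 by simp
  ultimately have "(a * u - b * ((y * u - w) / c))\<^sup>2 \<le> (a\<^sup>2 + b\<^sup>2 + 2 * \<bar>a * b\<bar> * \<bar>y\<bar> / c) * (u\<^sup>2 + w\<^sup>2 / s)"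
    by (meson order_trans mult_right_mono)
  also have "u\<^sup>2 + w\<^sup>2 / s = (s * u\<^sup>2 + w\<^sup>2) / s" using s0 by (simp add: field_simps)
  finally show ?thesis unfolding s_def .
qed

lemma A_young:
  fixes a b w x c e :: real
  assumes c: "c > 0" and e: "e > 0" and a: "a = (x * b - w) / c"
  shows "a\<^sup>2 + b\<^sup>2 \<le> (1 + x\<^sup>2 * (1 + 1 / e) / c\<^sup>2) * b\<^sup>2 + (1 + e) / c\<^sup>2 * w\<^sup>2"
proof -
  have y: "2 * (x * b) * w \<ge> - (e * w\<^sup>2 + (x * b)\<^sup>2 / e)"
  proof -
    have "0 \<le> (e * w + x * b)\<^sup>2 / e" using e by simp
    also have "(e * w + x * b)\<^sup>2 / e = e * w\<^sup>2 + 2 * (x * b) * w + (x * b)\<^sup>2 / e"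
      using e by (simp add: field_simps power2_eq_square)
    finally show ?thesis by linarith
  qed
  have "(x * b - w)\<^sup>2 \<le> (x * b)\<^sup>2 * (1 + 1 / e) + (1 + e) * w\<^sup>2"
    using y e by (simp add: power2_eq_square algebra_simps add_divide_distrib)
  then have "a\<^sup>2 \<le> ((x * b)\<^sup>2 * (1 + 1 / e) + (1 + e) * w\<^sup>2) / c\<^sup>2"
    unfolding a power_divide using c by (simp add: divide_right_mono)
  then show ?thesis by (simp add: power_mult_distrib add_divide_distrib algebra_simps)
qed



lemma kern_sq:
  assumes "y \<noteq> x"
  shows "(hermite_kernel n x y)\<^sup>2 = real (Suc n) / 2 *
     (hermite_fun (Suc n) x * hermite_fun n y - hermite_fun n x * hermite_fun (Suc n) y)\<^sup>2 / (x - y)\<^sup>2"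
proof -
  define D where "D = hermite_fun (Suc n) x * hermite_fun n y - hermite_fun n x * hermite_fun (Suc n) y"
  have xy: "x - y \<noteq> 0" using assms by simp
  have "hermite_kernel n x y = sqrt (2 * real (Suc n)) / 2 * D / (x - y)"
    using CD[of x y n] xy unfolding D_def by (simp add: field_simps)
  then have "(hermite_kernel n x y)\<^sup>2 = (sqrt (2 * real (Suc n)))\<^sup>2 / 4 * D\<^sup>2 / (x - y)\<^sup>2"
    by (simp add: power_divide power_mult_distrib power2_eq_square algebra_simps)
  also have "\<dots> = real (Suc n) / 2 * D\<^sup>2 / (x - y)\<^sup>2"
  proof -
    have "(sqrt (2 * real (Suc n)))\<^sup>2 = 2 * real (Suc n)" by (rule real_sqrt_pow2) simp
    then show ?thesis using xy by (simp add: field_simps)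
  qed
  finally show ?thesis unfolding D_def .
qed

lemma cs_simple: "(a * u - b * v)\<^sup>2 \<le> (a\<^sup>2 + b\<^sup>2) * (u\<^sup>2 + v\<^sup>2)" for a b u v :: real
proof -
  have "(a\<^sup>2 + b\<^sup>2) * (u\<^sup>2 + v\<^sup>2) - (a * u - b * v)\<^sup>2 = (a * v + b * u)\<^sup>2"
    by (simp add: power2_eq_square algebra_simps)
  then show ?thesis by (metis diff_ge_0_iff_ge zero_le_power2)
qed

lemma pt_outer:
  assumes "y \<noteq> x"
  shows "(hermite_kernel n x y)\<^sup>2 \<le> real (Suc n) / 2 *
    (((hermite_fun (Suc n) x)\<^sup>2 + (hermite_fun n x)\<^sup>2) * ((hermite_fun n y)\<^sup>2 + (hermite_fun (Suc n) y)\<^sup>2)) / (x - y)\<^sup>2"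
  unfolding kern_sq[OF assms]
  by (intro divide_right_mono mult_left_mono cs_simple) auto

lemma pt_bulk:
  assumes "y \<noteq> x" and s: "2 * real n + 1 - y\<^sup>2 > 0"
  shows "(hermite_kernel n x y)\<^sup>2 \<le> real (Suc n) / 2 *
    (((hermite_fun (Suc n) x)\<^sup>2 + (hermite_fun n x)\<^sup>2
      + 2 * \<bar>hermite_fun (Suc n) x * hermite_fun n x\<bar> * \<bar>y\<bar> / sqrt (2 * real (Suc n)))
     * (Fs n 0 / (2 * real n + 1 - y\<^sup>2))) / (x - y)\<^sup>2"
proof -
  define c where "c = sqrt (2 * real (Suc n))"
  define a where "a = hermite_fun (Suc n) x"
  define b where "b = hermite_fun n x"
  define u where "u = hermite_fun n y"
  define w where "w = y * u - c * hermite_fun (Suc n) y"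
  have c0: "c > 0" unfolding c_def by simp
  have v: "hermite_fun (Suc n) y = (y * u - w) / c" unfolding w_def using c0 by simp
  have lc: "2 * real n + 1 \<le> c\<^sup>2" unfolding c_def by simp
  have F: "Fs n y = (2 * real n + 1 - y\<^sup>2) * u\<^sup>2 + w\<^sup>2" unfolding Fs_def u_def w_def c_def by simp
  have "(a * u - b * hermite_fun (Suc n) y)\<^sup>2 \<le> (a\<^sup>2 + b\<^sup>2 + 2 * \<bar>a * b\<bar> * \<bar>y\<bar> / c) * (Fs n y / (2 * real n + 1 - y\<^sup>2))"
    unfolding v F by (rule bulk_cs[OF s c0 lc])
  also have "\<dots> \<le> (a\<^sup>2 + b\<^sup>2 + 2 * \<bar>a * b\<bar> * \<bar>y\<bar> / c) * (Fs n 0 / (2 * real n + 1 - y\<^sup>2))"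
    using s c0 Fs_le_0[of n y] by (intro mult_left_mono divide_right_mono) auto
  finally have *: "(a * u - b * hermite_fun (Suc n) y)\<^sup>2 \<le> (a\<^sup>2 + b\<^sup>2 + 2 * \<bar>a * b\<bar> * \<bar>y\<bar> / c) * (Fs n 0 / (2 * real n + 1 - y\<^sup>2))" .
  show ?thesis
    unfolding kern_sq[OF assms(1)]
    using * unfolding a_def b_def u_def c_def
    by (intro divide_right_mono mult_left_mono) auto
qed

lemma A_bound:
  fixes x e al :: real
  assumes e: "e > 0" and sx: "2 * real n + 1 - x\<^sup>2 > 0"
    and al1: "al \<ge> (1 + x\<^sup>2 * (1 + 1 / e) / (2 * real (Suc n))) / (2 * real n + 1 - x\<^sup>2)"
    and al2: "al \<ge> (1 + e) / (2 * real (Suc n))"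
  shows "(hermite_fun (Suc n) x)\<^sup>2 + (hermite_fun n x)\<^sup>2 \<le> al * Fs n 0"
proof -
  define c where "c = sqrt (2 * real (Suc n))"
  define b where "b = hermite_fun n x"
  define w where "w = x * b - c * hermite_fun (Suc n) x"
  have c0: "c > 0" unfolding c_def by simp
  have cc: "c\<^sup>2 = 2 * real (Suc n)" unfolding c_def by simp
  have a: "hermite_fun (Suc n) x = (x * b - w) / c" unfolding w_def using c0 by simp
  have F: "Fs n x = (2 * real n + 1 - x\<^sup>2) * b\<^sup>2 + w\<^sup>2" unfolding Fs_def b_def w_def c_def by simp
  have "(hermite_fun (Suc n) x)\<^sup>2 + b\<^sup>2 \<le> (1 + x\<^sup>2 * (1 + 1 / e) / c\<^sup>2) * b\<^sup>2 + (1 + e) / c\<^sup>2 * w\<^sup>2"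
    by (rule A_young[OF c0 e a])
  also have "\<dots> \<le> (al * (2 * real n + 1 - x\<^sup>2)) * b\<^sup>2 + al * w\<^sup>2"
  proof (intro add_mono mult_right_mono)
    show "1 + x\<^sup>2 * (1 + 1 / e) / c\<^sup>2 \<le> al * (2 * real n + 1 - x\<^sup>2)"
      using al1 sx unfolding cc by (simp add: divide_le_eq)
    show "(1 + e) / c\<^sup>2 \<le> al" using al2 unfolding cc .
  qed auto
  also have "\<dots> = al * Fs n x" unfolding F by (simp add: algebra_simps)
  also have "\<dots> \<le> al * Fs n 0"
  proof (rule mult_left_mono[OF Fs_le_0])
    have "0 < (1 + e) / c\<^sup>2" using e c0 by simp
    then show "0 \<le> al" using al2 unfolding cc by linarith
  qed
  finally show ?thesis unfolding b_def .
qed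



lemma int_B1:
  fixes x p Y r D :: real
  assumes xp: "x < p" and p: "0 < p" and pY: "p \<le> Y" and r: "r > 0"
  shows "set_integrable lborel {p..Y} (\<lambda>y. D * (1 / (y - x)\<^sup>2 + 8 / (r * \<bar>y\<bar>)))"
    and "(LINT y:{p..Y}|lborel. D * (1 / (y - x)\<^sup>2 + 8 / (r * \<bar>y\<bar>)))
           = D * (1 / (p - x) - 1 / (Y - x) + 8 / r * (ln Y - ln p))"
proof -
  have cont: "continuous_on {p..Y} (\<lambda>y. D * (1 / (y - x)\<^sup>2 + 8 / (r * \<bar>y\<bar>)))"
    using xp p r by (intro continuous_intros) auto
  show "set_integrable lborel {p..Y} (\<lambda>y. D * (1 / (y - x)\<^sup>2 + 8 / (r * \<bar>y\<bar>)))"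
    unfolding set_integrable_def by (rule borel_integrable_compact[OF compact_Icc cont])
  have "(LBINT y=p..Y. D * (1 / (y - x)\<^sup>2 + 8 / (r * \<bar>y\<bar>)))
     = D * (- 1 / (Y - x) + 8 / r * ln Y) - D * (- 1 / (p - x) + 8 / r * ln p)"
  proof (rule interval_integral_FTC_finite)
    show "continuous_on {min p Y..max p Y} (\<lambda>y. D * (1 / (y - x)\<^sup>2 + 8 / (r * \<bar>y\<bar>)))"
      using cont pY by simp
    fix y assume "min p Y \<le> y" "y \<le> max p Y"
    then have y: "p \<le> y" "y \<le> Y" using pY by auto
    then have yx: "y - x > 0" and y0: "y > 0" using xp p by auto
    have "((\<lambda>y. D * (- 1 / (y - x) + 8 / r * ln y)) has_real_derivative D * (1 / (y - x)\<^sup>2 + 8 / (r * \<bar>y\<bar>))) (at y)"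
      using yx y0 r by (auto intro!: derivative_eq_intros simp: field_simps power2_eq_square)
    then show "((\<lambda>y. D * (- 1 / (y - x) + 8 / r * ln y)) has_vector_derivative D * (1 / (y - x)\<^sup>2 + 8 / (r * \<bar>y\<bar>)))
        (at y within {min p Y..max p Y})"
      by (simp add: has_real_derivative_iff_has_vector_derivative[symmetric] has_field_derivative_at_within)
  qed
  then show "(LINT y:{p..Y}|lborel. D * (1 / (y - x)\<^sup>2 + 8 / (r * \<bar>y\<bar>)))
           = D * (1 / (p - x) - 1 / (Y - x) + 8 / r * (ln Y - ln p))"
    using pY by (simp add: interval_integral_Icc algebra_simps diff_divide_distrib)
qed

lemma int_B2:
  fixes x p Y r D :: real
  assumes xp: "- p < x" and p: "0 < p" and pY: "p \<le> Y" and r: "r > 0"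
  shows "set_integrable lborel {-Y..-p} (\<lambda>y. D * (1 / (y - x)\<^sup>2 + 8 / (r * \<bar>y\<bar>)))"
    and "(LINT y:{-Y..-p}|lborel. D * (1 / (y - x)\<^sup>2 + 8 / (r * \<bar>y\<bar>)))
           = D * (1 / (p + x) - 1 / (Y + x) + 8 / r * (ln Y - ln p))"
proof -
  have cont: "continuous_on {-Y..-p} (\<lambda>y. D * (1 / (y - x)\<^sup>2 + 8 / (r * \<bar>y\<bar>)))"
    using xp p r by (intro continuous_intros) auto
  show "set_integrable lborel {-Y..-p} (\<lambda>y. D * (1 / (y - x)\<^sup>2 + 8 / (r * \<bar>y\<bar>)))"
    unfolding set_integrable_def by (rule borel_integrable_compact[OF compact_Icc cont])
  have "(LBINT y=-Y..-p. D * (1 / (y - x)\<^sup>2 + 8 / (r * \<bar>y\<bar>)))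
     = D * (- 1 / (-p - x) - 8 / r * ln p) - D * (- 1 / (-Y - x) - 8 / r * ln Y)"
  proof -
    have "(LBINT y=-Y..-p. D * (1 / (y - x)\<^sup>2 + 8 / (r * \<bar>y\<bar>)))
      = D * (- 1 / (-p - x) - 8 / r * ln (- (-p))) - D * (- 1 / (-Y - x) - 8 / r * ln (- (-Y)))"
    proof (rule interval_integral_FTC_finite[where F="\<lambda>y. D * (- 1 / (y - x) - 8 / r * ln (- y))"])
      show "continuous_on {min (-Y) (-p)..max (-Y) (-p)} (\<lambda>y. D * (1 / (y - x)\<^sup>2 + 8 / (r * \<bar>y\<bar>)))"
        using cont pY by simp
      fix y assume "min (-Y) (-p) \<le> y" "y \<le> max (-Y) (-p)"
      then have y: "-Y \<le> y" "y \<le> -p" using pY by auto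
      then have yx: "y - x < 0" and y0: "y < 0" using xp p by auto
      have d1: "((\<lambda>y. - 1 / (y - x)) has_real_derivative 1 / (y - x)\<^sup>2) (at y)"
        using yx by (auto intro!: derivative_eq_intros simp: power2_eq_square)
      have d2: "((\<lambda>y. ln (- y)) has_real_derivative 1 / y) (at y)"
        using y0 by (auto intro!: derivative_eq_intros simp: field_simps)
      have d: "((\<lambda>y. D * (- 1 / (y - x) - 8 / r * ln (- y))) has_real_derivative D * (1 / (y - x)\<^sup>2 - 8 / r * (1 / y))) (at y)"
        by (intro DERIV_cmult DERIV_diff d1 d2)
      have eq: "D * (1 / (y - x)\<^sup>2 - 8 / r * (1 / y)) = D * (1 / (y - x)\<^sup>2 + 8 / (r * \<bar>y\<bar>))"
        using y0 by (simp add: abs_of_neg)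
      from d[unfolded eq] have "((\<lambda>y. D * (- 1 / (y - x) - 8 / r * ln (- y))) has_real_derivative D * (1 / (y - x)\<^sup>2 + 8 / (r * \<bar>y\<bar>))) (at y)" .
      then show "((\<lambda>y. D * (- 1 / (y - x) - 8 / r * ln (- y))) has_vector_derivative D * (1 / (y - x)\<^sup>2 + 8 / (r * \<bar>y\<bar>)))
          (at y within {min (-Y) (-p)..max (-Y) (-p)})"
        by (simp add: has_real_derivative_iff_has_vector_derivative[symmetric] has_field_derivative_at_within)
    qed
    then show ?thesis by simp
  qed
  show "(LINT y:{-Y..-p}|lborel. D * (1 / (y - x)\<^sup>2 + 8 / (r * \<bar>y\<bar>)))
           = D * (1 / (p + x) - 1 / (Y + x) + 8 / r * (ln Y - ln p))"
  proof -
    have "- p - x = - (p + x)" "- Y - x = - (Y + x)" by simp_all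
    then have m: "D / (- p - x) = - (D / (p + x))" "D / (- Y - x) = - (D / (Y + x))"
      by (simp_all only: divide_minus_right)
    from \<open>(LBINT y=-Y..-p. _) = _\<close> show ?thesis
      using pY m by (simp add: interval_integral_Icc algebra_simps diff_divide_distrib)
  qed
qed



lemma hf_cont[continuous_intros]: "continuous_on S (\<lambda>y. hermite_fun k y)"
  by (intro continuous_at_imp_continuous_on ballI DERIV_isCont[OF hf_deriv])

lemma kern_cont: "continuous_on S (\<lambda>y. (hermite_kernel n x y)\<^sup>2)"
  unfolding hermite_kernel_def by (intro continuous_intros)

lemma kern_meas: "(\<lambda>y. (hermite_kernel n x y)\<^sup>2) \<in> borel_measurable lborel"
  using borel_measurable_continuous_onI[OF kern_cont] by simp

lemma hf_sq_meas: "(\<lambda>y. (hermite_fun k y)\<^sup>2) \<in> borel_measurable lborel"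
  using borel_measurable_continuous_onI[of "\<lambda>y. (hermite_fun k y)\<^sup>2"]
  by (simp add: continuous_intros)

lemma kern_int: "integrable lborel (\<lambda>y. (hermite_kernel n x y)\<^sup>2)"
proof (rule Bochner_Integration.integrable_bound[OF _ kern_meas])
  show "integrable lborel (\<lambda>y. (\<Sum>k\<le>n. (hermite_fun k x)\<^sup>2) * (\<Sum>k\<le>n. (hermite_fun k y)\<^sup>2))"
    by (intro Bochner_Integration.integrable_mult_right Bochner_Integration.integrable_sum hf_sq_int)
  show "AE y in lborel. norm ((hermite_kernel n x y)\<^sup>2) \<le> norm ((\<Sum>k\<le>n. (hermite_fun k x)\<^sup>2) * (\<Sum>k\<le>n. (hermite_fun k y)\<^sup>2))"
  proof (rule AE_I2)
    fix y
    have "(hermite_kernel n x y)\<^sup>2 \<le> (\<Sum>k\<le>n. (hermite_fun k x)\<^sup>2) * (\<Sum>k\<le>n. (hermite_fun k y)\<^sup>2)"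
      unfolding hermite_kernel_def by (rule Cauchy_Schwarz_ineq_sum)
    moreover have "(\<Sum>k\<le>n. (hermite_fun k x)\<^sup>2) * (\<Sum>k\<le>n. (hermite_fun k y)\<^sup>2) \<ge> 0"
      by (intro mult_nonneg_nonneg sum_nonneg) auto
    ultimately show "norm ((hermite_kernel n x y)\<^sup>2) \<le> norm ((\<Sum>k\<le>n. (hermite_fun k x)\<^sup>2) * (\<Sum>k\<le>n. (hermite_fun k y)\<^sup>2))"
      by simp
  qed
qed

lemma hsq_set_int: "A \<in> sets lborel \<Longrightarrow> set_integrable lborel A (\<lambda>y. (hermite_fun k y)\<^sup>2)"
  unfolding set_integrable_def by (rule integrable_mult_indicator[OF _ hf_sq_int])

lemma kern_set_int: "A \<in> sets lborel \<Longrightarrow> set_integrable lborel A (\<lambda>y. (hermite_kernel n x y)\<^sup>2)"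
  unfolding set_integrable_def by (rule integrable_mult_indicator[OF _ kern_int])

lemma hsq_set_le:
  assumes A: "A \<in> sets lborel"
  shows "(LINT y:A|lborel. (hermite_fun k y)\<^sup>2) \<le> 1"
proof -
  have "(LINT y:A|lborel. (hermite_fun k y)\<^sup>2) = (LINT y|lborel. indicator A y * (hermite_fun k y)\<^sup>2)"
    unfolding set_lebesgue_integral_def by simp
  also have "\<dots> \<le> (LINT y|lborel. (hermite_fun k y)\<^sup>2)"
  proof (rule integral_mono)
    show "integrable lborel (\<lambda>y. indicator A y * (hermite_fun k y)\<^sup>2)"
      using integrable_mult_indicator[OF A hf_sq_int, of k] by simp
    show "integrable lborel (\<lambda>y. (hermite_fun k y)\<^sup>2)" by (rule hf_sq_int)
    fix y show "indicator A y * (hermite_fun k y)\<^sup>2 \<le> (hermite_fun k y)\<^sup>2"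
      by (simp add: indicator_def)
  qed
  also have "\<dots> = 1" by (rule hf_norm)
  finally show ?thesis .
qed



lemma bulk_arith:
  fixes l r c T x y a b F0 :: real
  assumes l17: "l \<ge> 17" and r: "r > 0" "r\<^sup>2 = l" and c: "c \<ge> r"
    and T: "T > 0" "\<bar>x\<bar> \<le> T" "2 * T \<le> \<bar>y\<bar>" "2 * \<bar>y\<bar> \<le> r"
    and F0: "F0 \<ge> 0" "F0\<^sup>2 * pi \<le> 4 / 3 * l"
    and Ab: "a\<^sup>2 + b\<^sup>2 \<le> 7 / (6 * l) * F0"
  shows "(l + 1) / 4 * ((a\<^sup>2 + b\<^sup>2 + 2 * \<bar>a * b\<bar> * \<bar>y\<bar> / c) * (F0 / (l - y\<^sup>2))) / (x - y)\<^sup>2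
     \<le> 7 / (17 * pi) * (1 / (y - x)\<^sup>2 + 8 / (r * \<bar>y\<bar>))"
proof -
  define A where "A = a\<^sup>2 + b\<^sup>2"
  define t where "t = \<bar>y\<bar> / r"
  have l0: "l > 0" using l17 by simp
  have y0: "\<bar>y\<bar> > 0" using T by simp
  have t0: "t \<ge> 0" "t \<le> 1 / 2" unfolding t_def using r T by (auto simp: field_simps)
  have ty: "\<bar>y\<bar> = t * r" unfolding t_def using r by simp
  have y2: "y\<^sup>2 = t\<^sup>2 * l"
  proof -
    have "y\<^sup>2 = \<bar>y\<bar>\<^sup>2" by simp
    also have "\<dots> = t\<^sup>2 * r\<^sup>2" unfolding ty by (simp add: power_mult_distrib)
    finally show ?thesis using r by simp
  qed
  have A0: "A \<ge> 0" unfolding A_def by simp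
  have s1: "2 * \<bar>a * b\<bar> \<le> A"
  proof -
    have "0 \<le> (\<bar>a\<bar> - \<bar>b\<bar>)\<^sup>2" by simp
    then show ?thesis unfolding A_def by (simp add: power2_eq_square algebra_simps abs_mult)
  qed
  have s2: "A + 2 * \<bar>a * b\<bar> * \<bar>y\<bar> / c \<le> A * (1 + t)"
  proof -
    have c0: "c > 0" using c r by simp
    have "2 * \<bar>a * b\<bar> * \<bar>y\<bar> / c \<le> A * \<bar>y\<bar> / c"
      using s1 c0 by (intro divide_right_mono mult_right_mono) auto
    also have "\<dots> \<le> A * \<bar>y\<bar> / r"
      using c0 r c A0 by (intro divide_left_mono) auto
    finally show ?thesis unfolding t_def by (simp add: algebra_simps)
  qed
  have ly: "l - y\<^sup>2 = l * (1 - t\<^sup>2)" unfolding y2 by (simp add: algebra_simps)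
  have lyp: "l - y\<^sup>2 > 0"
  proof -
    have "t\<^sup>2 \<le> (1/2)\<^sup>2" using t0 by (intro power_mono) auto
    then have "1 - t\<^sup>2 > 0" by (simp add: power2_eq_square)
    then show ?thesis unfolding ly using l0 by simp
  qed
  have s3: "(1 + t) / (l - y\<^sup>2) \<le> (1 + 2 * t) / l"
  proof -
    have "(1 + 2 * t) * (1 - t\<^sup>2) - (1 + t) = t * (1 + t) * (1 - 2 * t)"
      by (simp add: power2_eq_square algebra_simps)
    moreover have "t * (1 + t) * (1 - 2 * t) \<ge> 0" using t0 by simp
    ultimately have i: "(1 + t) \<le> (1 + 2 * t) * (1 - t\<^sup>2)" by linarith
    have e: "(1 + 2 * t) / l * (l * (1 - t\<^sup>2)) = (1 + 2 * t) * (1 - t\<^sup>2)" using l0 by simp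
    have P0: "l * (1 - t\<^sup>2) > 0" using lyp unfolding ly .
    show ?thesis unfolding ly pos_divide_le_eq[OF P0] e by (rule i)
  qed
  have s5: "A * F0 \<le> 14 / (9 * pi)"
  proof -
    have "A * F0 \<le> (7 / (6 * l) * F0) * F0" using Ab F0(1) unfolding A_def by (rule mult_right_mono)
    also have "\<dots> = 7 / (6 * l) / pi * (F0\<^sup>2 * pi)" by (simp add: power2_eq_square)
    also have "\<dots> \<le> 7 / (6 * l) / pi * (4 / 3 * l)" using F0(2) l0 by (intro mult_left_mono) auto
    also have "\<dots> = 14 / (9 * pi)" using l0 by (simp add: field_simps)
    finally show ?thesis .
  qed
  define M where "M = (l + 1) / 4 * ((A + 2 * \<bar>a * b\<bar> * \<bar>y\<bar> / c) * (F0 / (l - y\<^sup>2)))"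
  have sM: "M \<le> 7 / (17 * pi) * (1 + 2 * t)"
  proof -
    have "(A + 2 * \<bar>a * b\<bar> * \<bar>y\<bar> / c) * (F0 / (l - y\<^sup>2)) \<le> (A * (1 + t)) * (F0 / (l - y\<^sup>2))"
      using s2 F0 lyp by (intro mult_right_mono) auto
    also have "\<dots> = (A * F0) * ((1 + t) / (l - y\<^sup>2))" by simp
    also have "\<dots> \<le> (A * F0) * ((1 + 2 * t) / l)"
      using s3 A0 F0 by (intro mult_left_mono) auto
    also have "\<dots> \<le> 14 / (9 * pi) * ((1 + 2 * t) / l)"
      using s5 t0 l0 by (intro mult_right_mono) auto
    finally have "M \<le> (l + 1) / 4 * (14 / (9 * pi) * ((1 + 2 * t) / l))"
      unfolding M_def using l0 by (intro mult_left_mono) auto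
    also have "\<dots> = (l + 1) / l * (7 / (18 * pi) * (1 + 2 * t))" using l0 by (simp add: field_simps)
    also have "\<dots> \<le> 18 / 17 * (7 / (18 * pi) * (1 + 2 * t))"
      using l17 t0 l0 by (intro mult_right_mono) (auto simp: field_simps)
    also have "\<dots> = 7 / (17 * pi) * (1 + 2 * t)" by (simp add: field_simps)
    finally show ?thesis .
  qed
  have xy: "\<bar>x - y\<bar> \<ge> \<bar>y\<bar> / 2" using T by linarith
  have xy0: "(x - y)\<^sup>2 > 0" using xy y0 by auto
  have s6: "(1 + 2 * t) / (x - y)\<^sup>2 \<le> 1 / (y - x)\<^sup>2 + 8 / (r * \<bar>y\<bar>)"
  proof -
    have "\<bar>y\<bar>\<^sup>2 \<le> 4 * (x - y)\<^sup>2"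
    proof -
      have "\<bar>y\<bar>\<^sup>2 \<le> (2 * \<bar>x - y\<bar>)\<^sup>2" using xy y0 by (intro power_mono) auto
      then show ?thesis by (simp add: power_mult_distrib)
    qed
    then have "\<bar>y\<bar> / (x - y)\<^sup>2 \<le> 4 / \<bar>y\<bar>"
      using xy0 y0 by (simp add: divide_simps power2_eq_square mult.commute)
    then have q: "\<bar>y\<bar> / (x - y)\<^sup>2 \<le> 4 / \<bar>y\<bar>" .
    have "2 * t / (x - y)\<^sup>2 = 2 / r * (\<bar>y\<bar> / (x - y)\<^sup>2)" unfolding t_def by simp
    also have "\<dots> \<le> 2 / r * (4 / \<bar>y\<bar>)" using q r by (intro mult_left_mono) auto
    also have "\<dots> = 8 / (r * \<bar>y\<bar>)" by simp
    finally have "2 * t / (x - y)\<^sup>2 \<le> 8 / (r * \<bar>y\<bar>)" .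
    moreover have "(y - x)\<^sup>2 = (x - y)\<^sup>2" by (simp add: power2_commute)
    ultimately show ?thesis by (simp add: add_divide_distrib)
  qed
  have "M / (x - y)\<^sup>2 \<le> 7 / (17 * pi) * (1 + 2 * t) / (x - y)\<^sup>2"
    using sM xy0 by (intro divide_right_mono) auto
  also have "\<dots> = 7 / (17 * pi) * ((1 + 2 * t) / (x - y)\<^sup>2)" by simp
  also have "\<dots> \<le> 7 / (17 * pi) * (1 / (y - x)\<^sup>2 + 8 / (r * \<bar>y\<bar>))"
    using s6 by (intro mult_left_mono) auto
  finally show ?thesis unfolding M_def A_def .
qed



lemma ln_ge2: "(l::real) \<ge> 17 \<Longrightarrow> ln l \<ge> 2"
proof -
  assume l: "l \<ge> 17"
  have "exp (2::real) = exp 1 * exp 1" by (simp flip: exp_add)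
  also have "\<dots> \<le> 3 * 3" using exp_le by (intro mult_mono) auto
  finally have "exp (2::real) \<le> l" using l by simp
  then show ?thesis using l by (simp add: ln_ge_iff)
qed

lemma F0_le: "Fs n 0 \<le> 2 / 3 * sqrt (2 * real n + 1)"
proof -
  have "(Fs n 0)\<^sup>2 * pi \<le> 4 / 3 * (2 * real n + 1)" by (rule Fs0_bound)
  moreover have "(Fs n 0)\<^sup>2 * 3 \<le> (Fs n 0)\<^sup>2 * pi"
    using pi_gt3 by (intro mult_left_mono) auto
  ultimately have "(Fs n 0)\<^sup>2 * 3 \<le> 4 / 3 * (2 * real n + 1)" by linarith
  moreover have "(2 / 3 * sqrt (2 * real n + 1))\<^sup>2 = 4 / 9 * (2 * real n + 1)"
  proof -
    have q: "(sqrt (2 * real n + 1))\<^sup>2 = 2 * real n + 1" by simp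
    show ?thesis by (simp only: power_mult_distrib q) (simp add: power2_eq_square)
  qed
  ultimately have "(Fs n 0)\<^sup>2 \<le> (2 / 3 * sqrt (2 * real n + 1))\<^sup>2"
    by linarith
  then show ?thesis by (rule power2_le_imp_le) simp
qed

lemma S_meas: "{y::real. c \<le> \<bar>y\<bar>} \<in> sets lborel"
  by measurable

lemma case2:
  fixes T x :: real and n :: nat
  assumes T2: "T \<ge> 2" and nT: "real n \<ge> 2 * T\<^sup>2" and xT: "\<bar>x\<bar> \<le> T"
    and c2: "2 * real n + 1 < 64 * T\<^sup>2"
  shows "(LINT y:{y. \<bar>y\<bar> \<ge> 2 * T}|lborel. (hermite_kernel n x y)\<^sup>2)
           \<le> 2 / (pi\<^sup>2 * T) + 12 * T\<^sup>2 / sqrt (2 * real n + 1) * ln (2 * real n + 1)"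
proof -
  define l where "l = 2 * real n + 1"
  define r where "r = sqrt l"
  define Q where "Q = real (Suc n) / 2"
  define A where "A = (hermite_fun (Suc n) x)\<^sup>2 + (hermite_fun n x)\<^sup>2"
  define F0 where "F0 = Fs n 0"
  define S where "S = {y::real. 2 * T \<le> \<bar>y\<bar>}"
  have S: "S \<in> sets lborel" unfolding S_def by (rule S_meas)
  have x2: "x\<^sup>2 \<le> T\<^sup>2"
  proof -
    have "\<bar>x\<bar>\<^sup>2 \<le> T\<^sup>2" by (rule power_mono) (use xT in auto)
    then show ?thesis by simp
  qed
  have T4: "T\<^sup>2 \<ge> 4"
  proof -
    have "(2::real)\<^sup>2 \<le> T\<^sup>2" by (rule power_mono) (use T2 in auto)
    then show ?thesis by simp
  qed
  have l4: "4 * T\<^sup>2 + 1 \<le> l" unfolding l_def using nT by simp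
  have l17: "l \<ge> 17" using l4 T4 by simp
  have l0: "l > 0" using l17 by simp
  have r0: "r > 0" unfolding r_def using l0 by simp
  have rl: "r\<^sup>2 = l" unfolding r_def using l0 by simp
  have F0r: "F0 \<le> 2 / 3 * r" unfolding F0_def r_def l_def by (rule F0_le)
  have F00: "F0 \<ge> 0" unfolding F0_def by (rule Fs0_nonneg)
  have lnl: "ln l \<ge> 2" using l17 by (rule ln_ge2)
  have Ab: "A \<le> 2 / l * F0"
    unfolding A_def F0_def
  proof (rule A_bound[where e=1])
    show "2 * real n + 1 - x\<^sup>2 > 0" using x2 l4 T4 unfolding l_def by simp
    have "(1 + x\<^sup>2 * (1 + 1 / 1) / (2 * real (Suc n))) \<le> 1 + 2 * x\<^sup>2 / l"
    proof -
      have "x\<^sup>2 * (1 + 1 / 1) / (2 * real (Suc n)) \<le> 2 * x\<^sup>2 / l"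
        unfolding l_def by (rule frac_le) auto
      then show ?thesis by simp
    qed
    also have "\<dots> \<le> 2 / l * (l - x\<^sup>2)"
      using x2 l4 l0 by (simp add: field_simps)
    finally show "2 / l \<ge> (1 + x\<^sup>2 * (1 + 1 / 1) / (2 * real (Suc n))) / (2 * real n + 1 - x\<^sup>2)"
      using x2 l4 T4 unfolding l_def by (simp add: divide_le_eq)
    show "2 / l \<ge> (1 + 1) / (2 * real (Suc n))" unfolding l_def by (simp add: field_simps)
  qed simp
  have pw: "(hermite_kernel n x y)\<^sup>2 \<le> Q * A / T\<^sup>2 * ((hermite_fun n y)\<^sup>2 + (hermite_fun (Suc n) y)\<^sup>2)"
    if y: "y \<in> S" for y
  proof -
    have yx: "\<bar>x - y\<bar> \<ge> T" using y xT unfolding S_def by auto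
    have yx2: "(x - y)\<^sup>2 \<ge> T\<^sup>2"
    proof -
      have "T\<^sup>2 \<le> \<bar>x - y\<bar>\<^sup>2" by (rule power_mono) (use yx T2 in auto)
      then show ?thesis by simp
    qed
    have "y \<noteq> x" using yx T2 by auto
    then have "(hermite_kernel n x y)\<^sup>2 \<le> Q * (A * ((hermite_fun n y)\<^sup>2 + (hermite_fun (Suc n) y)\<^sup>2)) / (x - y)\<^sup>2"
      using pt_outer unfolding Q_def A_def by simp
    also have "\<dots> \<le> Q * (A * ((hermite_fun n y)\<^sup>2 + (hermite_fun (Suc n) y)\<^sup>2)) / T\<^sup>2"
    proof -
      have "T\<^sup>2 > 0" using T2 by simp
      then have "(x - y)\<^sup>2 > 0" using yx2 by linarith
      then have "(x - y)\<^sup>2 * T\<^sup>2 > 0" using \<open>T\<^sup>2 > 0\<close> by (rule mult_pos_pos)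
      then show ?thesis using yx2 unfolding Q_def A_def by (intro divide_left_mono) auto
    qed
    finally show ?thesis by simp
  qed
  have "(LINT y:S|lborel. (hermite_kernel n x y)\<^sup>2)
     \<le> (LINT y:S|lborel. Q * A / T\<^sup>2 * ((hermite_fun n y)\<^sup>2 + (hermite_fun (Suc n) y)\<^sup>2))"
  proof (rule set_integral_mono)
    show "set_integrable lborel S (\<lambda>y. (hermite_kernel n x y)\<^sup>2)" by (rule kern_set_int[OF S])
    show "set_integrable lborel S (\<lambda>y. Q * A / T\<^sup>2 * ((hermite_fun n y)\<^sup>2 + (hermite_fun (Suc n) y)\<^sup>2))"
      by (rule set_integrable_mult_right, rule set_integral_add(1)[OF hsq_set_int[OF S] hsq_set_int[OF S]])
    show "\<And>y. y \<in> S \<Longrightarrow> (hermite_kernel n x y)\<^sup>2 \<le> Q * A / T\<^sup>2 * ((hermite_fun n y)\<^sup>2 + (hermite_fun (Suc n) y)\<^sup>2)"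
      by (rule pw)
  qed
  also have "\<dots> = Q * A / T\<^sup>2 * ((LINT y:S|lborel. (hermite_fun n y)\<^sup>2) + (LINT y:S|lborel. (hermite_fun (Suc n) y)\<^sup>2))"
    using set_integral_add(2)[OF hsq_set_int[OF S] hsq_set_int[OF S]] by simp
  also have "\<dots> \<le> Q * A / T\<^sup>2 * (1 + 1)"
    unfolding Q_def A_def using T2 by (intro mult_left_mono add_mono hsq_set_le S) auto
  also have "\<dots> \<le> 4 / 3 * r / T\<^sup>2"
  proof -
    have "Q * A / T\<^sup>2 * (1 + 1) \<le> Q * (2 / l * F0) / T\<^sup>2 * (1 + 1)"
      using Ab T2 unfolding Q_def by (intro mult_right_mono divide_right_mono mult_left_mono) auto
    also have "\<dots> = (l + 1) / l * F0 / T\<^sup>2"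
    proof -
      have Ql: "Q = (l + 1) / 4" unfolding Q_def l_def by simp
      have "T \<noteq> 0" using T2 by simp
      then show ?thesis using l0 unfolding Ql by (simp add: field_simps)
    qed
    also have "\<dots> \<le> 2 * F0 / T\<^sup>2"
      using l17 F00 T2 by (intro divide_right_mono mult_right_mono) (auto simp: field_simps)
    also have "\<dots> \<le> 2 * (2 / 3 * r) / T\<^sup>2"
      using F0r T2 by (intro divide_right_mono mult_left_mono) auto
    finally show ?thesis by simp
  qed
  also have "\<dots> \<le> 12 * T\<^sup>2 / r * ln l"
  proof -
    have "(24 * 4) * T\<^sup>2 \<le> (24 * T\<^sup>2) * T\<^sup>2" using T4 by (intro mult_right_mono) auto
    moreover have "4 / 3 * l \<le> 4 / 3 * (64 * T\<^sup>2)" using c2 unfolding l_def by simp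
    ultimately have "4 / 3 * l \<le> 24 * T\<^sup>2 * T\<^sup>2" using T4 by simp
    also have "\<dots> = (12 * T\<^sup>2 * T\<^sup>2) * 2" by simp
    also have "\<dots> \<le> (12 * T\<^sup>2 * T\<^sup>2) * ln l" using lnl by (rule mult_left_mono) simp
    finally have "4 / 3 * r\<^sup>2 \<le> 12 * T\<^sup>2 * T\<^sup>2 * ln l" using rl by simp
    then show ?thesis using r0 T2 by (simp add: field_simps power2_eq_square)
  qed
  also have "\<dots> \<le> 2 / (pi\<^sup>2 * T) + 12 * T\<^sup>2 / r * ln l"
    using T2 by simp
  finally show ?thesis unfolding S_def r_def l_def by simp
qed



lemma case1:
  fixes T x :: real and n :: nat
  assumes T2: "T \<ge> 2" and nT: "real n \<ge> 2 * T\<^sup>2" and xT: "\<bar>x\<bar> \<le> T"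
    and c1: "64 * T\<^sup>2 \<le> 2 * real n + 1"
  shows "(LINT y:{y. \<bar>y\<bar> \<ge> 2 * T}|lborel. (hermite_kernel n x y)\<^sup>2)
           \<le> 2 / (pi\<^sup>2 * T) + 12 * T\<^sup>2 / sqrt (2 * real n + 1) * ln (2 * real n + 1)"
proof -
  define l where "l = 2 * real n + 1"
  define r where "r = sqrt l"
  define Q where "Q = real (Suc n) / 2"
  define A where "A = (hermite_fun (Suc n) x)\<^sup>2 + (hermite_fun n x)\<^sup>2"
  define F0 where "F0 = Fs n 0"
  define S where "S = {y::real. 2 * T \<le> \<bar>y\<bar>}"
  define Y where "Y = r / 2"
  define D where "D = 7 / (17 * pi)"
  define B1 where "B1 = {2 * T..Y}"
  define B2 where "B2 = {-Y..-(2 * T)}"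
  define Ou where "Ou = {y::real. Y < \<bar>y\<bar>}"
  define gB where "gB = (\<lambda>y. D * (1 / (y - x)\<^sup>2 + 8 / (r * \<bar>y\<bar>)))"
  define U where "U = (\<lambda>y. (hermite_fun n y)\<^sup>2 + (hermite_fun (Suc n) y)\<^sup>2)"
  define cO where "cO = Q * A * 16 / l"
  have S: "S \<in> sets lborel" unfolding S_def by (rule S_meas)
  have Om: "Ou \<in> sets lborel" unfolding Ou_def by measurable
  have x2: "x\<^sup>2 \<le> T\<^sup>2"
  proof -
    have "\<bar>x\<bar>\<^sup>2 \<le> T\<^sup>2" by (rule power_mono) (use xT in auto)
    then show ?thesis by simp
  qed
  have T4: "T\<^sup>2 \<ge> 4"
  proof -
    have "(2::real)\<^sup>2 \<le> T\<^sup>2" by (rule power_mono) (use T2 in auto)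
    then show ?thesis by simp
  qed
  have l4: "4 * T\<^sup>2 + 1 \<le> l" unfolding l_def using nT by simp
  have l64: "64 * T\<^sup>2 \<le> l" unfolding l_def using c1 .
  have l17: "l \<ge> 17" using l4 T4 by simp
  have l0: "l > 0" using l17 by simp
  have r0: "r > 0" unfolding r_def using l0 by simp
  have rl: "r\<^sup>2 = l" unfolding r_def using l0 by simp
  have F0r: "F0 \<le> 2 / 3 * r" unfolding F0_def r_def l_def by (rule F0_le)
  have F00: "F0 \<ge> 0" unfolding F0_def by (rule Fs0_nonneg)
  have F0b: "F0\<^sup>2 * pi \<le> 4 / 3 * l" unfolding F0_def l_def by (rule Fs0_bound)
  have lnl: "ln l \<ge> 2" using l17 by (rule ln_ge2)
  have r8: "8 * T \<le> r"
  proof (rule power2_le_imp_le)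
    show "(8 * T)\<^sup>2 \<le> r\<^sup>2" using l64 rl by (simp add: power_mult_distrib)
  qed (use r0 in simp)
  have Y4: "4 * T \<le> Y" unfolding Y_def using r8 by simp
  have D0: "D \<ge> 0" unfolding D_def by simp
  have Ab: "A \<le> 7 / (6 * l) * F0"
    unfolding A_def F0_def
  proof (rule A_bound[where e="1/8"])
    show "2 * real n + 1 - x\<^sup>2 > 0" using x2 l4 T4 unfolding l_def by simp
    have "(1 + x\<^sup>2 * (1 + 1 / (1/8)) / (2 * real (Suc n))) \<le> 1 + 9 * x\<^sup>2 / l"
    proof -
      have "x\<^sup>2 * (1 + 1 / (1/8)) / (2 * real (Suc n)) \<le> 9 * x\<^sup>2 / l"
        unfolding l_def by (rule frac_le) auto
      then show ?thesis by simp
    qed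
    also have "\<dots> \<le> 7 / (6 * l) * (l - x\<^sup>2)"
      using x2 l64 l0 by (simp add: field_simps)
    finally show "7 / (6 * l) \<ge> (1 + x\<^sup>2 * (1 + 1 / (1/8)) / (2 * real (Suc n))) / (2 * real n + 1 - x\<^sup>2)"
      using x2 l4 T4 unfolding l_def by (simp add: divide_le_eq)
    show "7 / (6 * l) \<ge> (1 + 1/8) / (2 * real (Suc n))" unfolding l_def by (simp add: field_simps)
  qed simp
  have A0: "A \<ge> 0" unfolding A_def by simp
  have Q0: "Q \<ge> 0" unfolding Q_def by simp
  have Ql: "Q = (l + 1) / 4" unfolding Q_def l_def by simp
  have pB: "(hermite_kernel n x y)\<^sup>2 \<le> gB y" if y1: "2 * T \<le> \<bar>y\<bar>" and y2: "\<bar>y\<bar> \<le> Y" for y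
  proof -
    have yx: "y \<noteq> x" using y1 xT T2 by auto
    have "y\<^sup>2 \<le> Y\<^sup>2"
    proof -
      have "\<bar>y\<bar>\<^sup>2 \<le> Y\<^sup>2" by (rule power_mono) (use y2 in auto)
      then show ?thesis by simp
    qed
    moreover have "Y\<^sup>2 = l / 4" unfolding Y_def using rl by (simp add: power_divide)
    ultimately have sy: "2 * real n + 1 - y\<^sup>2 > 0" using l0 unfolding l_def by simp
    have cr: "sqrt (2 * real (Suc n)) \<ge> r" unfolding r_def l_def by simp
    have "(hermite_kernel n x y)\<^sup>2 \<le> real (Suc n) / 2 *
      (((hermite_fun (Suc n) x)\<^sup>2 + (hermite_fun n x)\<^sup>2
      + 2 * \<bar>hermite_fun (Suc n) x * hermite_fun n x\<bar> * \<bar>y\<bar> / sqrt (2 * real (Suc n)))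
      * (Fs n 0 / (2 * real n + 1 - y\<^sup>2))) / (x - y)\<^sup>2"
      by (rule pt_bulk[OF yx sy])
    also have "\<dots> = (l + 1) / 4 *
      (((hermite_fun (Suc n) x)\<^sup>2 + (hermite_fun n x)\<^sup>2
      + 2 * \<bar>hermite_fun (Suc n) x * hermite_fun n x\<bar> * \<bar>y\<bar> / sqrt (2 * real (Suc n)))
      * (F0 / (l - y\<^sup>2))) / (x - y)\<^sup>2"
    proof -
      have e: "real (Suc n) / 2 = (2 * real n + 1 + 1) / 4" by simp
      show ?thesis unfolding l_def F0_def by (simp only: e)
    qed
    also have "\<dots> \<le> 7 / (17 * pi) * (1 / (y - x)\<^sup>2 + 8 / (r * \<bar>y\<bar>))"
    proof (rule bulk_arith[OF l17 r0 rl cr])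
      show "T > 0" using T2 by simp
      show "\<bar>x\<bar> \<le> T" by (rule xT)
      show "2 * T \<le> \<bar>y\<bar>" by (rule y1)
      show "2 * \<bar>y\<bar> \<le> r" using y2 unfolding Y_def by simp
      show "F0 \<ge> 0" by (rule F00)
      show "F0\<^sup>2 * pi \<le> 4 / 3 * l" by (rule F0b)
      show "(hermite_fun (Suc n) x)\<^sup>2 + (hermite_fun n x)\<^sup>2 \<le> 7 / (6 * l) * F0"
        using Ab unfolding A_def .
    qed
    finally show ?thesis unfolding gB_def D_def .
  qed
  have pO: "(hermite_kernel n x y)\<^sup>2 \<le> cO * U y" if y1: "Y < \<bar>y\<bar>" for y
  proof -
    have yx: "\<bar>x - y\<bar> \<ge> r / 4" using y1 xT Y4 unfolding Y_def by linarith
    then have yx2: "(x - y)\<^sup>2 \<ge> l / 16"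
    proof -
      have "(r / 4)\<^sup>2 \<le> \<bar>x - y\<bar>\<^sup>2" by (rule power_mono) (use yx r0 in auto)
      then show ?thesis using rl by (simp add: power_divide)
    qed
    have "y \<noteq> x" using yx r0 by auto
    then have "(hermite_kernel n x y)\<^sup>2 \<le> Q * (A * U y) / (x - y)\<^sup>2"
      using pt_outer unfolding Q_def A_def U_def by simp
    also have "\<dots> \<le> Q * (A * U y) / (l / 16)"
    proof (rule divide_left_mono[OF yx2])
      show "0 \<le> Q * (A * U y)" using Q0 A0 unfolding U_def by simp
      show "0 < (x - y)\<^sup>2 * (l / 16)" using yx2 l0 by (intro mult_pos_pos) auto
    qed
    also have "\<dots> = cO * U y" unfolding cO_def by simp
    finally show ?thesis .
  qed
  define g where "g = (\<lambda>y. indicator B1 y *\<^sub>R gB y + indicator B2 y *\<^sub>R gB y + indicator Ou y *\<^sub>R (cO * U y))"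
  have intB1: "set_integrable lborel B1 gB"
    unfolding B1_def gB_def by (rule int_B1(1)) (use xT T2 Y4 r0 in auto)
  have intB2: "set_integrable lborel B2 gB"
    unfolding B2_def gB_def by (rule int_B2(1)) (use xT T2 Y4 r0 in auto)
  have intO: "set_integrable lborel Ou (\<lambda>y. cO * U y)"
    unfolding U_def by (rule set_integrable_mult_right, rule set_integral_add(1)[OF hsq_set_int[OF Om] hsq_set_int[OF Om]])
  have gint: "integrable lborel g"
    unfolding g_def using intB1 intB2 intO unfolding set_integrable_def
    by (intro Bochner_Integration.integrable_add)
  have pw: "indicator S y *\<^sub>R (hermite_kernel n x y)\<^sup>2 \<le> g y" for y
  proof (cases "y \<in> S")
    case False
    then have "y \<notin> B1" "y \<notin> B2" "y \<notin> Ou" unfolding S_def B1_def B2_def Ou_def using Y4 T2 by auto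
    then show ?thesis using False unfolding g_def by simp
  next
    case True
    then have yS: "2 * T \<le> \<bar>y\<bar>" unfolding S_def by simp
    show ?thesis
    proof (cases "\<bar>y\<bar> \<le> Y")
      case True
      then have nO: "y \<notin> Ou" unfolding Ou_def by simp
      show ?thesis
      proof (cases "y \<ge> 0")
        case True
        then have "y \<in> B1" "y \<notin> B2" unfolding B1_def B2_def using yS \<open>\<bar>y\<bar> \<le> Y\<close> T2 by auto
        then show ?thesis using nO \<open>y \<in> S\<close> pB[OF yS \<open>\<bar>y\<bar> \<le> Y\<close>] unfolding g_def by simp
      next
        case False
        then have "y \<notin> B1" "y \<in> B2" unfolding B1_def B2_def using yS \<open>\<bar>y\<bar> \<le> Y\<close> T2 by auto
        then show ?thesis using nO \<open>y \<in> S\<close> pB[OF yS \<open>\<bar>y\<bar> \<le> Y\<close>] unfolding g_def by simp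
      qed
    next
      case False
      then have "y \<notin> B1" "y \<notin> B2" "y \<in> Ou" unfolding B1_def B2_def Ou_def using T2 by (auto simp: abs_if)
      then show ?thesis using \<open>y \<in> S\<close> pO[of y] False unfolding g_def by simp
    qed
  qed
  have "(LINT y:S|lborel. (hermite_kernel n x y)\<^sup>2) \<le> (LINT y|lborel. g y)"
    unfolding set_lebesgue_integral_def
  proof (rule integral_mono)
    show "integrable lborel (\<lambda>y. indicator S y *\<^sub>R (hermite_kernel n x y)\<^sup>2)"
      using kern_set_int[OF S] unfolding set_integrable_def .
  qed (use gint pw in auto)
  also have "(LINT y|lborel. g y) = (LINT y:B1|lborel. gB y) + (LINT y:B2|lborel. gB y) + (LINT y:Ou|lborel. cO * U y)"
    unfolding g_def set_lebesgue_integral_def using intB1 intB2 intO unfolding set_integrable_def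
    by (simp add: Bochner_Integration.integral_add)
  finally have main: "(LINT y:S|lborel. (hermite_kernel n x y)\<^sup>2)
     \<le> (LINT y:B1|lborel. gB y) + (LINT y:B2|lborel. gB y) + (LINT y:Ou|lborel. cO * U y)" .
  have I1: "(LINT y:B1|lborel. gB y) = D * (1 / (2 * T - x) - 1 / (Y - x) + 8 / r * (ln Y - ln (2 * T)))"
    unfolding B1_def gB_def by (rule int_B1(2)) (use xT T2 Y4 r0 in auto)
  have I2: "(LINT y:B2|lborel. gB y) = D * (1 / (2 * T + x) - 1 / (Y + x) + 8 / r * (ln Y - ln (2 * T)))"
    unfolding B2_def gB_def by (rule int_B2(2)) (use xT T2 Y4 r0 in auto)
  have I3: "(LINT y:Ou|lborel. cO * U y) \<le> cO * 2"
  proof -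
    have "(LINT y:Ou|lborel. cO * U y) = cO * ((LINT y:Ou|lborel. (hermite_fun n y)\<^sup>2) + (LINT y:Ou|lborel. (hermite_fun (Suc n) y)\<^sup>2))"
      unfolding U_def using set_integral_add(2)[OF hsq_set_int[OF Om] hsq_set_int[OF Om]] by simp
    also have "\<dots> \<le> cO * (1 + 1)"
      using Q0 A0 l0 unfolding cO_def by (intro mult_left_mono add_mono hsq_set_le Om) auto
    finally show ?thesis by simp
  qed
  have lnY: "ln Y - ln (2 * T) \<le> ln l / 2"
  proof -
    have "ln (2 * T) \<ge> 0" using T2 by simp
    moreover have "ln Y \<le> ln r" unfolding Y_def using r0 by simp
    moreover have "ln r = ln l / 2" unfolding r_def using l0 by (simp add: ln_sqrt)
    ultimately show ?thesis by linarith
  qed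
  have frac: "1 / (2 * T - x) + 1 / (2 * T + x) \<le> 4 / (3 * T)"
  proof -
    have p1: "2 * T - x > 0" "2 * T + x > 0" using xT T2 by auto
    have "1 / (2 * T - x) + 1 / (2 * T + x) = 4 * T / (4 * T\<^sup>2 - x\<^sup>2)"
      using p1 by (simp add: field_simps power2_eq_square)
    also have "\<dots> \<le> 4 * T / (3 * T\<^sup>2)"
      using x2 T4 T2 by (intro divide_left_mono) auto
    also have "\<dots> = 4 / (3 * T)" using T2 by (simp add: power2_eq_square)
    finally show ?thesis .
  qed
  have I12: "(LINT y:B1|lborel. gB y) + (LINT y:B2|lborel. gB y) \<le> D * (4 / (3 * T)) + D * 8 * ln l / r"
  proof -
    have n1: "1 / (Y - x) \<ge> 0" "1 / (Y + x) \<ge> 0" using xT Y4 T2 by auto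
    have "(LINT y:B1|lborel. gB y) + (LINT y:B2|lborel. gB y)
       \<le> D * (1 / (2 * T - x) + 1 / (2 * T + x)) + D * (16 / r * (ln Y - ln (2 * T)))"
      unfolding I1 I2 using n1 D0 by (simp add: algebra_simps mult_left_mono)
    also have "\<dots> \<le> D * (4 / (3 * T)) + D * (16 / r * (ln l / 2))"
      using frac lnY D0 r0 by (intro add_mono mult_left_mono) auto
    also have "\<dots> = D * (4 / (3 * T)) + D * 8 * ln l / r" by simp
    finally show ?thesis .
  qed
  have t1: "D * (4 / (3 * T)) \<le> 2 / (pi\<^sup>2 * T)"
  proof -
    have "D * (4 / (3 * T)) = 28 / (51 * pi * T)" unfolding D_def by simp
    also have "\<dots> \<le> 2 / (pi\<^sup>2 * T)"
      using pi_approx(2) pi_gt3 T2 by (simp add: field_simps power2_eq_square)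
    finally show ?thesis .
  qed
  have t2: "cO * 2 \<le> 13 / r"
  proof -
    have "cO * 2 = 32 * Q * A / l" unfolding cO_def by simp
    also have "\<dots> \<le> 32 * Q * (7 / (6 * l) * F0) / l"
      using Ab Q0 l0 by (intro divide_right_mono mult_left_mono) auto
    also have "\<dots> = 28 / 3 * ((l + 1) / l) * F0 / l" unfolding Ql using l0 by (simp add: field_simps)
    also have "\<dots> \<le> 28 / 3 * 2 * (2 / 3 * r) / l"
      using F00 F0r l0 l17 by (intro divide_right_mono mult_mono) (auto simp: field_simps)
    also have "\<dots> = 112 / 9 / r" using rl r0 l0 by (simp add: field_simps power2_eq_square)
    also have "\<dots> \<le> 13 / r" using r0 by (simp add: field_simps)
    finally show ?thesis .
  qed
  have t3: "D * 8 * ln l / r + 13 / r \<le> 12 * T\<^sup>2 / r * ln l"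
  proof -
    have "D * 8 \<le> 2" unfolding D_def using pi_gt3 by (simp add: field_simps)
    then have "D * 8 * ln l \<le> 2 * ln l" using lnl by (intro mult_right_mono) auto
    moreover have "12 * T\<^sup>2 * ln l \<ge> 48 * ln l" using T4 lnl by (intro mult_right_mono) auto
    ultimately have "D * 8 * ln l + 13 \<le> 12 * T\<^sup>2 * ln l" using lnl by linarith
    then have "(D * 8 * ln l + 13) / r \<le> 12 * T\<^sup>2 * ln l / r" using r0 by (intro divide_right_mono) auto
    then show ?thesis by (simp add: add_divide_distrib)
  qed
  have "(LINT y:S|lborel. (hermite_kernel n x y)\<^sup>2) \<le> 2 / (pi\<^sup>2 * T) + 12 * T\<^sup>2 / r * ln l"
    using main I12 I3 t1 t2 t3 by linarith
  then show ?thesis unfolding S_def r_def l_def by simp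
qed


theorem mainTheorem6:
  fixes T x :: real and n :: nat
  assumes "T \<ge> 2" and "real n \<ge> 2 * T\<^sup>2" and "\<bar>x\<bar> \<le> T"
  shows "(LINT y:{y. \<bar>y\<bar> \<ge> 2 * T}|lborel. (hermite_kernel n x y)\<^sup>2)
           \<le> 2 / (pi\<^sup>2 * T) + 12 * T\<^sup>2 / sqrt (2 * real n + 1) * ln (2 * real n + 1)"
proof (cases "2 * real n + 1 < 64 * T\<^sup>2")
  case True
  then show ?thesis using case2[OF assms] by blast
next
  case False
  then show ?thesis using case1[OF assms] by simp
qed

end
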